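(* Let $n\ge 3$ and let $A=(a_{ij})\in\mathbb{R}^{n\times n}$ be symmetric (indefinite), and suppose $PAP^T=LTL^T$ where $P$ is a permutation matrix, $L=(l_{ij})$ is unit lower triangular with first column $e_1$ and $|l_{ij}|\le 1$ for all $i,j$, and $T=(t_{ij})$ is symmetric tridiagonal (as produced by Aasen's algorithm). Then the growth factor satisfies $$\rho:=\frac{\max_{i,j}|t_{ij}|}{\max_{i,j}|a_{ij}|}\le 2^{n-1}.$$ Moreover, if $n\ge 6$, then this bound is not attained: $|t_{nn}|<2^{n-1}\max_{i,j}|a_{ij}|$, and hence $\rho<2^{n-1}$.
   Context: $e_1$ denotes the first column of the $n\times n$ identity matrix. The growth factor of the factorization is the ratio of the largest absolute entry of $T$ to the largest absolute entry of $A$. It is assumed $A\neq 0$. *)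

theory Defs
  imports "Jordan_Normal_Form.Matrix" "HOL-Combinatorics.Permutations"
begin

text \<open>Indices are 0-based: an n x n matrix has entries M $$ (i,j) with i, j < n.\<close>

definition symmetric_mat :: "real mat \<Rightarrow> bool" where
  "symmetric_mat M \<longleftrightarrow> M\<^sup>T = M"

definition permutation_mat :: "nat \<Rightarrow> real mat \<Rightarrow> bool" where
  "permutation_mat n P \<longleftrightarrow> (\<exists>\<sigma>. \<sigma> permutes {..<n} \<and>
      P = mat n n (\<lambda>(i,j). if j = \<sigma> i then 1 else 0))"

definition unit_lower_triangular :: "nat \<Rightarrow> real mat \<Rightarrow> bool" where
  "unit_lower_triangular n L \<longleftrightarrow> L \<in> carrier_mat n n \<and>
      (\<forall>i<n. L $$ (i,i) = 1) \<and> (\<forall>i<n. \<forall>j<n. i < j \<longrightarrow> L $$ (i,j) = 0)"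

definition tridiagonal :: "nat \<Rightarrow> real mat \<Rightarrow> bool" where
  "tridiagonal n T \<longleftrightarrow> T \<in> carrier_mat n n \<and>
      (\<forall>i<n. \<forall>j<n. i + 1 < j \<or> j + 1 < i \<longrightarrow> T $$ (i,j) = 0)"

definition max_abs_entry :: "nat \<Rightarrow> real mat \<Rightarrow> real" where
  "max_abs_entry n M = Max {\<bar>M $$ (i,j)\<bar> | i j. i < n \<and> j < n}"

definition growth_factor :: "nat \<Rightarrow> real mat \<Rightarrow> real mat \<Rightarrow> real" where
  "growth_factor n T A = max_abs_entry n T / max_abs_entry n A"

end

theory Submission
  imports Defs
begin

lemma geom_sum: "i \<ge> 1 \<Longrightarrow> (\<Sum>k\<in>{1..<i}. (2::real)^(k-1)) = 2^(i-1) - 1"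
proof (induction i rule: nat_induct_at_least)
  case base then show ?case by simp
next
  case (Suc m)
  have "{1..<Suc m} = insert m {1..<m}" using Suc by auto
  then show ?case using Suc by (cases m) (auto simp: power_Suc)
qed

lemma sgn_solve: "(u::real) * u = 1 \<Longrightarrow> u * x = y \<Longrightarrow> x = u * y"
proof -
  assume a: "u * u = 1" "u * x = y"
  have "u * y = u * (u * x)" using a(2) by simp
  also have "\<dots> = (u * u) * x" by (simp only: mult.assoc)
  also have "\<dots> = x" using a(1) by simp
  finally show ?thesis by simp
qed

locale aasen =
  fixes n :: nat and l t b h :: "nat \<Rightarrow> nat \<Rightarrow> real" and \<alpha> :: real
  assumes n3: "n \<ge> 3"
    and l_diag: "\<And>i. i < n \<Longrightarrow> l i i = 1"
    and l_up: "\<And>i j. i < j \<Longrightarrow> j < n \<Longrightarrow> l i j = 0"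
    and l_col0: "\<And>i. 0 < i \<Longrightarrow> i < n \<Longrightarrow> l i 0 = 0"
    and l_bd: "\<And>i j. i < n \<Longrightarrow> j < n \<Longrightarrow> \<bar>l i j\<bar> \<le> 1"
    and t_tri: "\<And>i j. i < n \<Longrightarrow> j < n \<Longrightarrow> i + 1 < j \<or> j + 1 < i \<Longrightarrow> t i j = 0"
    and t_sym: "\<And>i j. i < n \<Longrightarrow> j < n \<Longrightarrow> t i j = t j i"
    and h_def: "\<And>k j. h k j = (\<Sum>m\<in>{0..<n}. t k m * l j m)"
    and b_def: "\<And>i j. i < n \<Longrightarrow> j < n \<Longrightarrow> b i j = (\<Sum>k\<in>{0..<n}. l i k * h k j)"
    and b_sym: "\<And>i j. i < n \<Longrightarrow> j < n \<Longrightarrow> b i j = b j i"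
    and b_bd: "\<And>i j. i < n \<Longrightarrow> j < n \<Longrightarrow> \<bar>b i j\<bar> \<le> \<alpha>"
    and \<alpha>_pos: "\<alpha> > 0"
begin

lemma hess: "k < n \<Longrightarrow> j + 2 \<le> k \<Longrightarrow> h k j = 0"
  unfolding h_def
proof (intro sum.neutral ballI)
  fix m assume "k < n" "j + 2 \<le> k" "m \<in> {0..<n}"
  show "t k m * l j m = 0"
  proof (cases "j < m")
    case True then show ?thesis using l_up \<open>m \<in> _\<close> by simp
  next
    case False then show ?thesis using t_tri[of k m] \<open>k<n\<close> \<open>j+2\<le>k\<close> \<open>m \<in> _\<close> by simp
  qed
qed

lemma h_sub: "1 \<le> k \<Longrightarrow> k < n \<Longrightarrow> h k (k-1) = t k (k-1)"
proof -
  assume k: "1 \<le> k" "k < n"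
  have "h k (k-1) = (\<Sum>m\<in>{k-1}. t k m * l (k-1) m)"
    unfolding h_def
  proof (rule sum.mono_neutral_right)
    show "\<forall>m\<in>{0..<n} - {k-1}. t k m * l (k - 1) m = 0"
    proof
      fix m assume m: "m \<in> {0..<n} - {k-1}"
      show "t k m * l (k - 1) m = 0"
      proof (cases "k - 1 < m")
        case True then show ?thesis using l_up[of "k-1" m] m by simp
      next
        case False then have "m + 1 < k" using k m by auto
        then show ?thesis using t_tri[of k m] k m by auto
      qed
    qed
  qed (use k in auto)
  then show ?thesis using l_diag[of "k-1"] k by simp
qed

lemma t_diag: "1 \<le> k \<Longrightarrow> k < n \<Longrightarrow> t k k = h k k - l k (k-1) * h k (k-1)"
proof -
  assume k: "1 \<le> k" "k < n"
  have "h k k = (\<Sum>m\<in>{k-1,k}. t k m * l k m)"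
    unfolding h_def
  proof (rule sum.mono_neutral_right)
    show "\<forall>m\<in>{0..<n} - {k-1,k}. t k m * l k m = 0"
    proof
      fix m assume m: "m \<in> {0..<n} - {k-1,k}"
      show "t k m * l k m = 0"
      proof (cases "k < m")
        case True then show ?thesis using l_up[of k m] m by simp
      next
        case False then show ?thesis using t_tri[of k m] k m by auto
      qed
    qed
  qed (use k in auto)
  also have "\<dots> = t k (k-1) * l k (k-1) + t k k" using k l_diag[of k] by simp
  finally show ?thesis using h_sub[OF k] by simp
qed

lemma row0: "j < n \<Longrightarrow> b 0 j = h 0 j"
proof -
  assume j: "j < n"
  have "b 0 j = (\<Sum>k\<in>{0..<n}. l 0 k * h k j)" using b_def j by simp
  also have "\<dots> = (\<Sum>k\<in>{0}. l 0 k * h k j)"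
  proof (rule sum.mono_neutral_right)
    show "\<forall>k\<in>{0..<n} - {0}. l 0 k * h k j = 0" using l_up by auto
  qed (use j in auto)
  finally show ?thesis using l_diag[of 0] j by simp
qed

lemma t00: "t 0 0 = h 0 0"
proof -
  have "h 0 0 = (\<Sum>m\<in>{0}. t 0 m * l 0 m)"
    unfolding h_def
  proof (rule sum.mono_neutral_right)
    show "\<forall>m\<in>{0..<n} - {0}. t 0 m * l 0 m = 0" using l_up n3 by auto
  qed (use n3 in auto)
  then show ?thesis using l_diag[of 0] n3 by simp
qed

lemma rowi: "1 \<le> i \<Longrightarrow> i < n \<Longrightarrow> j < n \<Longrightarrow> b i j = h i j + (\<Sum>k\<in>{1..<i}. l i k * h k j)"
proof -
  assume i: "1 \<le> i" "i < n" and j: "j < n"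
  have "b i j = (\<Sum>k\<in>insert i {1..<i}. l i k * h k j)"
    unfolding b_def[OF i(2) j]
  proof (rule sum.mono_neutral_right)
    show "\<forall>k\<in>{0..<n} - insert i {1..<i}. l i k * h k j = 0"
    proof
      fix k assume k: "k \<in> {0..<n} - insert i {1..<i}"
      then have "k = 0 \<or> i < k" by auto
      then show "l i k * h k j = 0" using l_col0 l_up i k by auto
    qed
  qed (use i in auto)
  then show ?thesis using l_diag[of i] i by simp
qed


lemma h_eq: "1 \<le> i \<Longrightarrow> i < n \<Longrightarrow> j < n \<Longrightarrow> h i j = b i j - (\<Sum>k\<in>{1..<i}. l i k * h k j)"
  using rowi by simp

lemma h_bd: "1 \<le> i \<Longrightarrow> i < n \<Longrightarrow> j < n \<Longrightarrow> \<bar>h i j\<bar> \<le> 2^(i-1)*\<alpha>"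
proof (induction i rule: less_induct)
  case (less i)
  have "\<bar>h i j\<bar> \<le> \<bar>b i j\<bar> + \<bar>\<Sum>k\<in>{1..<i}. l i k * h k j\<bar>"
    using h_eq[OF less.prems] by linarith
  also have "\<dots> \<le> \<alpha> + (\<Sum>k\<in>{1..<i}. 2^(k-1)*\<alpha>)"
  proof (rule add_mono)
    show "\<bar>b i j\<bar> \<le> \<alpha>" using b_bd less.prems by simp
    have "\<bar>\<Sum>k\<in>{1..<i}. l i k * h k j\<bar> \<le> (\<Sum>k\<in>{1..<i}. \<bar>l i k * h k j\<bar>)"
      by (rule sum_abs)
    also have "\<dots> \<le> (\<Sum>k\<in>{1..<i}. 2^(k-1)*\<alpha>)"
    proof (rule sum_mono)
      fix k assume k: "k \<in> {1..<i}"
      have "\<bar>l i k\<bar> \<le> 1" using l_bd k less.prems by simp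
      moreover have "\<bar>h k j\<bar> \<le> 2^(k-1)*\<alpha>" using less.IH[of k] k less.prems by simp
      ultimately show "\<bar>l i k * h k j\<bar> \<le> 2^(k-1)*\<alpha>"
        by (simp add: abs_mult mult_le_one mult_mono' order_trans[OF mult_right_mono] )
    qed
    finally show "\<bar>\<Sum>k\<in>{1..<i}. l i k * h k j\<bar> \<le> (\<Sum>k\<in>{1..<i}. 2^(k-1)*\<alpha>)" .
  qed
  also have "\<dots> = 2^(i-1)*\<alpha>"
  proof -
    have g: "(\<Sum>k\<in>{1..<i}. (2::real)^(k-1)) = 2^(i-1) - 1" by (rule geom_sum) (use less.prems in simp)
    show ?thesis by (simp only: sum_distrib_right[symmetric] g) (simp add: algebra_simps)
  qed
  finally show ?case .
qed


lemma t_sub_bd: "1 \<le> i \<Longrightarrow> i < n \<Longrightarrow> \<bar>t i (i-1)\<bar> < 2^(n-1)*\<alpha>"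
proof -
  assume i: "1 \<le> i" "i < n"
  have "\<bar>t i (i-1)\<bar> \<le> 2^(i-1)*\<alpha>" using h_sub[OF i] h_bd[OF i, of "i-1"] i by simp
  also have "\<dots> < 2^(n-1)*\<alpha>"
    using \<alpha>_pos i by (intro mult_strict_right_mono power_strict_increasing) auto
  finally show ?thesis .
qed

lemma t_diag_bd: "1 \<le> i \<Longrightarrow> i < n \<Longrightarrow> \<bar>t i i\<bar> \<le> 2^i*\<alpha>"
proof -
  assume i: "1 \<le> i" "i < n"
  have a: "\<bar>h i i\<bar> \<le> 2^(i-1)*\<alpha>" using h_bd[OF i] i by simp
  have c: "\<bar>h i (i-1)\<bar> \<le> 2^(i-1)*\<alpha>" using h_bd[OF i] i by simp
  have "\<bar>l i (i-1) * h i (i-1)\<bar> \<le> \<bar>h i (i-1)\<bar>"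
    using l_bd[of i "i-1"] i by (simp add: abs_mult mult_left_le_one_le)
  then have "\<bar>t i i\<bar> \<le> 2^(i-1)*\<alpha> + 2^(i-1)*\<alpha>" using t_diag[OF i] a c by linarith
  also have "\<dots> = 2^i*\<alpha>" using i by (cases i) auto
  finally show ?thesis .
qed

lemma t_le_strict: "i < n \<Longrightarrow> j < n \<Longrightarrow> \<not>(i = n-1 \<and> j = n-1) \<Longrightarrow> \<bar>t i j\<bar> < 2^(n-1)*\<alpha>"
proof -
  assume ij: "i < n" "j < n" "\<not>(i = n-1 \<and> j = n-1)"
  have pos: "0 < 2^(n-1)*\<alpha>" using \<alpha>_pos by simp
  consider "i + 1 < j \<or> j + 1 < i" | "j = i + 1" | "i = j + 1" | "i = j" by linarith
  then show ?thesis
  proof cases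
    case 1 then show ?thesis using t_tri ij pos by simp
  next
    case 2 then show ?thesis using t_sym[of i j] t_sub_bd[of j] ij by simp
  next
    case 3 then show ?thesis using t_sub_bd[of i] ij by simp
  next
    case 4
    show ?thesis
    proof (cases "i = 0")
      case True
      have "\<bar>t i j\<bar> \<le> \<alpha>" using True 4 t00 row0[of 0] b_bd[of 0 0] n3 by simp
      also have "\<alpha> < 2^(n-1)*\<alpha>" using \<alpha>_pos n3
        by (simp add: one_less_power)
      finally show ?thesis .
    next
      case False
      then have "\<bar>t i j\<bar> \<le> 2^i*\<alpha>" using t_diag_bd[of i] 4 ij by simp
      also have "\<dots> < 2^(n-1)*\<alpha>" using \<alpha>_pos ij 4 
        by (intro mult_strict_right_mono power_strict_increasing) auto
      finally show ?thesis .
    qed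
  qed
qed

lemma t_le: "i < n \<Longrightarrow> j < n \<Longrightarrow> \<bar>t i j\<bar> \<le> 2^(n-1)*\<alpha>"
proof -
  assume ij: "i < n" "j < n"
  show ?thesis
  proof (cases "i = n-1 \<and> j = n-1")
    case True then show ?thesis using t_diag_bd[of "n-1"] n3 by simp
  next
    case False then show ?thesis using t_le_strict ij by fastforce
  qed
qed


definition sg :: "nat \<Rightarrow> nat \<Rightarrow> real" where
  "sg i j = h i j / (2^(i-1)*\<alpha>)"

lemma h_sg: "h i j = sg i j * (2^(i-1)*\<alpha>)"
  using \<alpha>_pos unfolding sg_def by simp

lemma sg_sq: "\<bar>h i j\<bar> = 2^(i-1)*\<alpha> \<Longrightarrow> sg i j * sg i j = 1"
proof -
  assume a: "\<bar>h i j\<bar> = 2^(i-1)*\<alpha>"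
  have "\<bar>sg i j\<bar> = 1" using a \<alpha>_pos unfolding sg_def by (simp add: abs_divide)
  then show ?thesis by (cases "sg i j \<ge> 0") auto
qed

lemma sg_abs: "\<bar>h i j\<bar> = 2^(i-1)*\<alpha> \<Longrightarrow> \<bar>sg i j\<bar> = 1"
  using \<alpha>_pos unfolding sg_def by (simp add: abs_divide)

lemma prop1:
  assumes i: "1 \<le> i" "i < n" and j: "j < n" and eq: "\<bar>h i j\<bar> = 2^(i-1)*\<alpha>"
  shows "b i j = sg i j * \<alpha> \<and> (\<forall>k\<in>{1..<i}. l i k * h k j = - sg i j * (2^(k-1)*\<alpha>))"
proof -
  define s where "s = sg i j"
  have ss: "s * s = 1" using sg_sq[OF eq] s_def by simp
  have as: "\<bar>s\<bar> = 1" using sg_abs[OF eq] s_def by simp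
  have sh: "s * h i j = 2^(i-1)*\<alpha>" using h_sg[of i j] ss s_def by (simp add: mult.assoc[symmetric])
  have g: "(\<Sum>k\<in>{1..<i}. (2::real)^(k-1)) = 2^(i-1) - 1" by (rule geom_sum) (use i in simp)
  have bsum: "2^(i-1)*\<alpha> = \<alpha> + (\<Sum>k\<in>{1..<i}. 2^(k-1)*\<alpha>)"
    by (simp only: sum_distrib_right[symmetric] g) (simp add: algebra_simps)
  have "s * h i j = s * b i j - (\<Sum>k\<in>{1..<i}. s * (l i k * h k j))"
    using h_eq[OF i j] by (simp add: right_diff_distrib sum_distrib_left)
  then have "(\<alpha> - s * b i j) + (\<Sum>k\<in>{1..<i}. 2^(k-1)*\<alpha> + s * (l i k * h k j)) = 0"
    using sh bsum by (simp add: sum.distrib)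
  moreover have n1: "\<alpha> - s * b i j \<ge> 0"
  proof -
    have "\<bar>s * b i j\<bar> \<le> \<alpha>" using as b_bd i j by (simp add: abs_mult)
    then show ?thesis by linarith
  qed
  moreover have n2: "\<forall>k\<in>{1..<i}. 2^(k-1)*\<alpha> + s * (l i k * h k j) \<ge> 0"
  proof
    fix k assume k: "k \<in> {1..<i}"
    have "\<bar>l i k\<bar> \<le> 1" using l_bd k i by simp
    moreover have "\<bar>h k j\<bar> \<le> 2^(k-1)*\<alpha>" using h_bd[of k j] k i j by simp
    ultimately have "\<bar>l i k\<bar> * \<bar>h k j\<bar> \<le> 2^(k-1)*\<alpha>"
      using mult_right_mono[of "\<bar>l i k\<bar>" 1 "\<bar>h k j\<bar>"] by simp
    then have "\<bar>s * (l i k * h k j)\<bar> \<le> 2^(k-1)*\<alpha>"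
      using as by (simp add: abs_mult)
    then show "2^(k-1)*\<alpha> + s * (l i k * h k j) \<ge> 0" by linarith
  qed
  moreover have "0 \<le> (\<Sum>k\<in>{1..<i}. 2^(k-1)*\<alpha> + s * (l i k * h k j))"
    using n2 by (intro sum_nonneg) auto
  ultimately have z1: "\<alpha> - s * b i j = 0" and z2: "(\<Sum>k\<in>{1..<i}. 2^(k-1)*\<alpha> + s * (l i k * h k j)) = 0"
    by linarith+
  have "b i j = s * \<alpha>"
  proof -
    have "s * (s * b i j) = s * \<alpha>" using z1 by simp
    then show ?thesis using ss by (simp add: mult.assoc[symmetric])
  qed
  moreover have "\<forall>k\<in>{1..<i}. l i k * h k j = - s * (2^(k-1)*\<alpha>)"
  proof
    fix k assume k: "k \<in> {1..<i}"
    have "2^(k-1)*\<alpha> + s * (l i k * h k j) = 0"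
      using z2 n2 k by (subst (asm) sum_nonneg_eq_0_iff) auto
    then have "s * (l i k * h k j) = - (2^(k-1)*\<alpha>)" by linarith
    then have "s * (s * (l i k * h k j)) = s * (- (2^(k-1)*\<alpha>))" by simp
    then show "l i k * h k j = - s * (2^(k-1)*\<alpha>)" using ss by (simp add: mult.assoc[symmetric])
  qed
  ultimately show ?thesis using s_def by simp
qed

lemma prop_col:
  assumes i: "1 \<le> i" "i < n" and j: "j < n" and eq: "\<bar>h i j\<bar> = 2^(i-1)*\<alpha>"
    and k: "1 \<le> k" "k \<le> i"
  shows "\<bar>h k j\<bar> = 2^(k-1)*\<alpha>"
proof (cases "k = i")
  case True then show ?thesis using eq by simp
next
  case False
  then have kk: "k \<in> {1..<i}" using k by simp
  have e: "l i k * h k j = - sg i j * (2^(k-1)*\<alpha>)" using prop1[OF i j eq] kk by blast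
  have "\<bar>l i k * h k j\<bar> = 2^(k-1)*\<alpha>" using e sg_abs[OF eq] \<alpha>_pos by (simp add: abs_mult)
  moreover have "\<bar>l i k\<bar> \<le> 1" using l_bd kk i by simp
  ultimately have "2^(k-1)*\<alpha> \<le> \<bar>h k j\<bar>"
    by (metis abs_ge_zero abs_mult mult_left_le_one_le)
  moreover have "\<bar>h k j\<bar> \<le> 2^(k-1)*\<alpha>" using h_bd[of k j] kk i j by simp
  ultimately show ?thesis by linarith
qed

lemma l_sg:
  assumes i: "1 \<le> i" "i < n" and j: "j < n" and eq: "\<bar>h i j\<bar> = 2^(i-1)*\<alpha>"
    and k: "1 \<le> k" "k < i"
  shows "l i k = - (sg i j * sg k j)"
proof -
  have e: "l i k * h k j = - sg i j * (2^(k-1)*\<alpha>)" using prop1[OF i j eq] k by auto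
  have eqk: "\<bar>h k j\<bar> = 2^(k-1)*\<alpha>" using prop_col[OF i j eq, of k] k by simp
  have "(l i k * sg k j) * (2^(k-1)*\<alpha>) = (- sg i j) * (2^(k-1)*\<alpha>)" using e h_sg[of k j] by (simp add: mult.assoc)
  moreover have "(2::real)^(k-1)*\<alpha> \<noteq> 0" using \<alpha>_pos by simp
  ultimately have "l i k * sg k j = - sg i j" using mult_right_cancel by blast
  then have "l i k * (sg k j * sg k j) = - sg i j * sg k j" by (metis mult.assoc)
  then show ?thesis using sg_sq[OF eqk] by simp
qed


lemma last_strict:
  assumes n6: "n \<ge> 6"
  shows "\<bar>t (n-1) (n-1)\<bar> < 2^(n-1)*\<alpha>"
proof (rule ccontr)
  assume "\<not> ?thesis"
  then have ge: "2^(n-1)*\<alpha> \<le> \<bar>t (n-1) (n-1)\<bar>" by simp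
  define N where "N = n - 1"
  have N5: "N \<ge> 5" and Nn: "N < n" and nN: "n - 1 = N" using n6 N_def by auto
  have N1: "1 \<le> N" using N5 by simp
  have bNN: "\<bar>h N N\<bar> \<le> 2^(N-1)*\<alpha>" and bN1: "\<bar>h N (N-1)\<bar> \<le> 2^(N-1)*\<alpha>"
    using h_bd[OF N1 Nn] Nn by auto
  have lh: "\<bar>l N (N-1) * h N (N-1)\<bar> \<le> \<bar>h N (N-1)\<bar>"
    using l_bd[of N "N-1"] Nn by (simp add: abs_mult mult_left_le_one_le)
  have tNN: "t N N = h N N - l N (N-1) * h N (N-1)" using t_diag[OF N1 Nn] .
  have p2: "(2::real)^N*\<alpha> = 2^(N-1)*\<alpha> + 2^(N-1)*\<alpha>" using N1 by (cases N) auto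
  have ge': "2^N*\<alpha> \<le> \<bar>t N N\<bar>" using ge nN by simp
  have eNN: "\<bar>h N N\<bar> = 2^(N-1)*\<alpha>" and eN1: "\<bar>h N (N-1)\<bar> = 2^(N-1)*\<alpha>"
    using ge' tNN p2 bNN bN1 lh by linarith+
  have colA: "\<And>k. 1 \<le> k \<Longrightarrow> k \<le> N \<Longrightarrow> \<bar>h k (N-1)\<bar> = 2^(k-1)*\<alpha>"
    using prop_col[OF N1 Nn _ eN1] Nn by simp
  have colB: "\<And>k. 1 \<le> k \<Longrightarrow> k \<le> N \<Longrightarrow> \<bar>h k N\<bar> = 2^(k-1)*\<alpha>"
    using prop_col[OF N1 Nn Nn eNN] by simp
  define s where "s k = sg k (N-1)" for k
  define s' where "s' k = sg k N" for k
  have ss: "\<And>k. 1 \<le> k \<Longrightarrow> k \<le> N \<Longrightarrow> s k * s k = 1" using colA sg_sq s_def by simp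
  have ss': "\<And>k. 1 \<le> k \<Longrightarrow> k \<le> N \<Longrightarrow> s' k * s' k = 1" using colB sg_sq s'_def by simp
  have sa: "\<And>k. 1 \<le> k \<Longrightarrow> k \<le> N \<Longrightarrow> \<bar>s k\<bar> = 1" using colA sg_abs s_def by simp
  have bs: "\<And>k. 1 \<le> k \<Longrightarrow> k \<le> N \<Longrightarrow> b k (N-1) = s k * \<alpha>"
  proof -
    fix k assume k: "1 \<le> k" "k \<le> N"
    have kn: "k < n" "N - 1 < n" using k Nn by auto
    show "b k (N-1) = s k * \<alpha>" using prop1[OF k(1) kn colA[OF k]] s_def by simp
  qed
  have bs': "\<And>k. 1 \<le> k \<Longrightarrow> k \<le> N \<Longrightarrow> b k N = s' k * \<alpha>"
  proof -
    fix k assume k: "1 \<le> k" "k \<le> N"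
    have kn: "k < n" using k Nn by auto
    show "b k N = s' k * \<alpha>" using prop1[OF k(1) kn Nn colB[OF k]] s'_def by simp
  qed
  have ls: "\<And>i k. 1 \<le> k \<Longrightarrow> k < i \<Longrightarrow> i \<le> N \<Longrightarrow> l i k = - (s i * s k)"
  proof -
    fix i k assume a: "1 \<le> k" "k < i" "i \<le> N"
    show "l i k = - (s i * s k)" unfolding s_def
      by (rule l_sg) (use a Nn colA[of i] in auto)
  qed
  have ls': "\<And>i k. 1 \<le> k \<Longrightarrow> k < i \<Longrightarrow> i \<le> N \<Longrightarrow> l i k = - (s' i * s' k)"
  proof -
    fix i k assume a: "1 \<le> k" "k < i" "i \<le> N"
    show "l i k = - (s' i * s' k)" unfolding s'_def
      by (rule l_sg) (use a Nn colB[of i] in auto)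
  qed
  define S where "S m j = (\<Sum>k\<in>{1..<m}. s k * h k j)" for m j
  have recur: "\<And>i j. 1 \<le> i \<Longrightarrow> i \<le> N \<Longrightarrow> j < n \<Longrightarrow> s i * h i j = s i * b i j + S i j"
  proof -
    fix i j assume a: "1 \<le> i" "i \<le> N" "j < n"
    have "h i j = b i j - (\<Sum>k\<in>{1..<i}. l i k * h k j)" using h_eq[of i j] a Nn by simp
    also have "(\<Sum>k\<in>{1..<i}. l i k * h k j) = (\<Sum>k\<in>{1..<i}. - s i * (s k * h k j))"
      by (rule sum.cong) (use a ls in auto)
    also have "\<dots> = - s i * S i j" unfolding S_def by (simp add: sum_distrib_left)
    finally have "h i j = b i j + s i * S i j" by simp
    then have "s i * h i j = s i * b i j + (s i * s i) * S i j" by (simp add: algebra_simps)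
    then show "s i * h i j = s i * b i j + S i j" using ss[OF a(1,2)] by simp
  qed
  have SS: "\<And>i j. 1 \<le> i \<Longrightarrow> i \<le> N \<Longrightarrow> j < n \<Longrightarrow> S (Suc i) j = 2 * S i j + s i * b i j"
  proof -
    fix i j assume a: "1 \<le> i" "i \<le> N" "j < n"
    have "{1..<Suc i} = insert i {1..<i}" using a by auto
    then have "S (Suc i) j = s i * h i j + S i j" unfolding S_def by simp
    then show "S (Suc i) j = 2 * S i j + s i * b i j" using recur[OF a] by simp
  qed
  have Hz: "\<And>i j. 1 \<le> i \<Longrightarrow> i \<le> N \<Longrightarrow> j + 2 \<le> i \<Longrightarrow> s i * b i j = - S i j"
  proof -
    fix i j assume a: "1 \<le> i" "i \<le> N" "j + 2 \<le> i"
    have "h i j = 0" using hess[of i j] a Nn by simp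
    then show "s i * b i j = - S i j" using recur[of i j] a Nn by simp
  qed
  have HzS: "\<And>i j. 1 \<le> i \<Longrightarrow> i \<le> N \<Longrightarrow> j + 2 \<le> i \<Longrightarrow> S (Suc i) j = S i j"
  proof -
    fix i j assume a: "1 \<le> i" "i \<le> N" "j + 2 \<le> i"
    have jn: "j < n" using a Nn by simp
    show "S (Suc i) j = S i j" using SS[OF a(1,2) jn] Hz[OF a] by simp
  qed
  define \<tau> where "\<tau> = s (N-1) * s (N-2)"
  have \<tau>\<tau>: "\<tau> * \<tau> = 1"
  proof -
    have "\<tau> * \<tau> = (s (N-1) * s (N-1)) * (s (N-2) * s (N-2))" unfolding \<tau>_def by (simp add: algebra_simps)
    then show ?thesis using ss[of "N-1"] ss[of "N-2"] N5 by simp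
  qed
  have ak: "\<And>k. 1 \<le> k \<Longrightarrow> k \<le> N - 4 \<Longrightarrow> s k * b k (N-2) = \<tau> * \<alpha>"
  proof -
    fix k assume k: "1 \<le> k" "k \<le> N - 4"
    have e1: "s (N-1) * b (N-1) k = - S (N-1) k" using Hz[of "N-1" k] k N5 by simp
    have e2: "s (N-2) * b (N-2) k = - S (N-2) k" using Hz[of "N-2" k] k N5 by simp
    have e3: "S (Suc (N-2)) k = S (N-2) k" using HzS[of "N-2" k] k N5 by simp
    have "Suc (N-2) = N - 1" using N5 by simp
    then have "s (N-2) * b (N-2) k = s (N-1) * b (N-1) k" using e1 e2 e3 by simp
    also have "b (N-1) k = s k * \<alpha>" using b_sym[of "N-1" k] bs[of k] k N5 Nn by simp
    finally have "s (N-2) * b (N-2) k = s (N-1) * (s k * \<alpha>)" .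
    moreover have sN2: "s (N-2) * s (N-2) = 1" using ss[of "N-2"] N5 by simp
    ultimately have "b (N-2) k = s (N-2) * (s (N-1) * (s k * \<alpha>))" using sgn_solve by blast
    then have "s k * b k (N-2) = (s k * s k) * (s (N-1) * s (N-2)) * \<alpha>"
      using b_sym[of "N-2" k] k N5 Nn by (simp add: algebra_simps)
    then show "s k * b k (N-2) = \<tau> * \<alpha>" using ss[of k] k \<tau>_def by simp
  qed
  have sNN1: "s N = s' (N-1)"
  proof -
    have "s N * \<alpha> = s' (N-1) * \<alpha>" using bs[of N] bs'[of "N-1"] b_sym[of N "N-1"] N5 Nn by simp
    then show ?thesis using \<alpha>_pos by simp
  qed
  have s'N: "s' N = s (N-1)"
  proof -
    have "s N * s (N-1) = s' N * s' (N-1)" using ls[of "N-1" N] ls'[of "N-1" N] N5 by simp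
    then have "s N * s (N-1) = s N * s' N" using sNN1 by simp
    then have "s N * (s N * s (N-1)) = s N * (s N * s' N)" by simp
    then show ?thesis using ss[of N] N1 by (simp add: mult.assoc[symmetric])
  qed
  have s'N2: "s N * s' (N-2) = \<tau>"
  proof -
    have "s N * s (N-2) = s' N * s' (N-2)" using ls[of "N-2" N] ls'[of "N-2" N] N5 by simp
    then have "s N * (s N * s (N-2)) = s N * (s (N-1) * s' (N-2))" using s'N by simp
    then have "s (N-2) = s N * (s (N-1) * s' (N-2))" using ss[of N] N5 by (simp add: mult.assoc[symmetric])
    then have e: "s (N-1) * s (N-2) = (s (N-1) * s (N-1)) * (s N * s' (N-2))" by (simp only: ac_simps)
    have "s (N-1) * s (N-1) = 1" using ss[of "N-1"] N5 by simp
    then show ?thesis using e \<tau>_def by simp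
  qed
  have bN2: "s N * b N (N-2) = \<tau> * \<alpha>"
    using b_sym[of N "N-2"] bs'[of "N-2"] s'N2 N5 Nn by (simp add: mult.assoc[symmetric])
  have b12: "s (N-1) * b (N-1) (N-2) = \<tau> * \<alpha>"
    using b_sym[of "N-1" "N-2"] bs[of "N-2"] N5 Nn \<tau>_def by (simp add: mult.assoc[symmetric])
  have SN1: "S (N-1) (N-2) = - (\<tau> * \<alpha>)"
  proof -
    have e1: "s N * b N (N-2) = - S N (N-2)" using Hz[of N "N-2"] N5 by simp
    have e2: "S (Suc (N-1)) (N-2) = 2 * S (N-1) (N-2) + s (N-1) * b (N-1) (N-2)"
      using SS[of "N-1" "N-2"] N5 Nn by simp
    have "Suc (N-1) = N" using N5 by simp
    then show ?thesis using e1 e2 bN2 b12 by simp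
  qed
  have Sm: "\<And>m. 1 \<le> m \<Longrightarrow> m \<le> N - 3 \<Longrightarrow> S m (N-2) = (2^(m-1) - 1) * \<tau> * \<alpha>"
  proof -
    fix m assume "1 \<le> m" "m \<le> N - 3"
    then show "S m (N-2) = (2^(m-1) - 1) * \<tau> * \<alpha>"
    proof (induction m rule: nat_induct_at_least)
      case base then show ?case unfolding S_def by simp
    next
      case (Suc m)
      have "S (Suc m) (N-2) = 2 * S m (N-2) + s m * b m (N-2)"
        using SS[of m "N-2"] Suc N5 Nn by simp
      also have "\<dots> = 2 * ((2^(m-1) - 1) * \<tau> * \<alpha>) + \<tau> * \<alpha>"
        using Suc ak[of m] by simp
      also have "\<dots> = (2^(Suc m - 1) - 1) * \<tau> * \<alpha>"
        using Suc by (cases m) (auto simp: algebra_simps)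
      finally show ?case .
    qed
  qed
  have e43: "N - 3 - 1 = N - 4" by simp
  have S3: "S (N-3) (N-2) = (2^(N-4) - 1) * \<tau> * \<alpha>" using Sm[of "N-3"] N5
    unfolding e43 by simp
  have S2: "S (N-2) (N-2) = 2 * S (N-3) (N-2) + s (N-3) * b (N-3) (N-2)"
  proof -
    have "Suc (N-3) = N-2" using N5 by simp
    then show ?thesis using SS[of "N-3" "N-2"] N5 Nn by simp
  qed
  have S1: "S (N-1) (N-2) = 2 * S (N-2) (N-2) + s (N-2) * b (N-2) (N-2)"
  proof -
    have "Suc (N-2) = N-1" using N5 by simp
    then show ?thesis using SS[of "N-2" "N-2"] N5 Nn by simp
  qed
  define x where "x = s (N-3) * b (N-3) (N-2)"
  define y where "y = s (N-2) * b (N-2) (N-2)"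
  have xb: "\<bar>x\<bar> \<le> \<alpha>" unfolding x_def using sa[of "N-3"] b_bd[of "N-3" "N-2"] N5 Nn by (simp add: abs_mult)
  have yb: "\<bar>y\<bar> \<le> \<alpha>" unfolding y_def using sa[of "N-2"] b_bd[of "N-2" "N-2"] N5 Nn by (simp add: abs_mult)
  define A :: real where "A = 2^(N-4)"
  have A2: "A \<ge> 2" unfolding A_def using N5
  proof -
    have "(2::real)^1 \<le> 2^(N-4)" by (rule power_increasing) (use N5 in auto)
    then show "(2::real)^(N-4) \<ge> 2" by simp
  qed
  have eq: "- (\<tau> * \<alpha>) = 4 * (A - 1) * \<tau> * \<alpha> + 2 * x + y"
    using SN1 S1 S2 S3 x_def y_def A_def by (simp add: algebra_simps)
  then have e2: "2 * x + y = \<tau> * (- \<alpha> - 4 * (A - 1) * \<alpha>)"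
    by (simp add: algebra_simps)
  have "\<tau> * (2 * x + y) = (\<tau> * \<tau>) * (- \<alpha> - 4 * (A - 1) * \<alpha>)"
    by (simp only: e2 mult.assoc)
  then have "\<tau> * (2 * x + y) = - \<alpha> - 4 * (A - 1) * \<alpha>" using \<tau>\<tau> by simp
  then have "\<bar>\<tau> * (2 * x + y)\<bar> = \<bar>- \<alpha> - 4 * (A - 1) * \<alpha>\<bar>" by simp
  moreover have "\<bar>\<tau>\<bar> = 1" using sa[of "N-1"] sa[of "N-2"] N5 \<tau>_def by (simp add: abs_mult)
  moreover have "\<bar>- \<alpha> - 4 * (A - 1) * \<alpha>\<bar> = \<alpha> + 4 * (A - 1) * \<alpha>"
  proof -
    have "0 \<le> (A - 1) * \<alpha>" using A2 \<alpha>_pos by simp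
    then have "0 \<le> \<alpha> + 4 * (A - 1) * \<alpha>" using \<alpha>_pos by linarith
    moreover have "- \<alpha> - 4 * (A - 1) * \<alpha> = - (\<alpha> + 4 * (A - 1) * \<alpha>)" by simp
    ultimately show ?thesis by simp
  qed
  ultimately have "\<bar>2 * x + y\<bar> = \<alpha> + 4 * (A - 1) * \<alpha>" by (simp add: abs_mult)
  moreover have "\<bar>2 * x + y\<bar> \<le> 3 * \<alpha>" using xb yb by linarith
  moreover have "4 * (A - 1) * \<alpha> \<ge> 4 * \<alpha>" using A2 \<alpha>_pos by simp
  ultimately show False using \<alpha>_pos by linarith
qed

end

lemma mae_fin: "finite {\<bar>M $$ (i,j)\<bar> | i j. i < n \<and> j < n}"
proof (rule finite_subset)
  show "{\<bar>M $$ (i,j)\<bar> | i j. i < n \<and> j < n} \<subseteq> (\<lambda>(i,j). \<bar>M $$ (i,j)\<bar>) ` ({..<n} \<times> {..<n})"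
    by auto
qed auto

lemma mae_ge: "i < n \<Longrightarrow> j < n \<Longrightarrow> \<bar>M $$ (i,j)\<bar> \<le> max_abs_entry n M"
  unfolding max_abs_entry_def by (rule Max_ge[OF mae_fin]) auto

lemma mae_le: "0 < n \<Longrightarrow> (\<And>i j. i < n \<Longrightarrow> j < n \<Longrightarrow> \<bar>M $$ (i,j)\<bar> \<le> c) \<Longrightarrow> max_abs_entry n M \<le> c"
  unfolding max_abs_entry_def by (subst Max_le_iff[OF mae_fin]) auto

lemma mae_less: "0 < n \<Longrightarrow> (\<And>i j. i < n \<Longrightarrow> j < n \<Longrightarrow> \<bar>M $$ (i,j)\<bar> < c) \<Longrightarrow> max_abs_entry n M < c"
  unfolding max_abs_entry_def by (subst Max_less_iff[OF mae_fin]) auto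

theorem theorem1:
  fixes n :: nat and A P L T :: "real mat"
  assumes n3: "n \<ge> 3"
    and A: "A \<in> carrier_mat n n" "symmetric_mat A" "A \<noteq> 0\<^sub>m n n"
    and P: "permutation_mat n P"
    and L: "unit_lower_triangular n L"
    and L_e1: "\<forall>i<n. i \<noteq> 0 \<longrightarrow> L $$ (i,0) = 0"
    and L_bd: "\<forall>i<n. \<forall>j<n. \<bar>L $$ (i,j)\<bar> \<le> 1"
    and T: "tridiagonal n T" "symmetric_mat T"
    and fact: "P * A * P\<^sup>T = L * T * L\<^sup>T"
  shows "growth_factor n T A \<le> 2 ^ (n - 1)
         \<and> (n \<ge> 6 \<longrightarrow>
              \<bar>T $$ (n - 1, n - 1)\<bar> < 2 ^ (n - 1) * max_abs_entry n A
              \<and> growth_factor n T A < 2 ^ (n - 1))"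
proof -
  obtain \<sigma> where \<sigma>: "\<sigma> permutes {..<n}" and Pd: "P = mat n n (\<lambda>(i,j). if j = \<sigma> i then 1 else 0)"
    using P unfolding permutation_mat_def by blast
  have \<sigma>n: "\<And>i. i < n \<Longrightarrow> \<sigma> i < n" using permutes_in_image[OF \<sigma>] by simp
  have Lc: "L \<in> carrier_mat n n" using L unfolding unit_lower_triangular_def by simp
  have Tc: "T \<in> carrier_mat n n" using T unfolding tridiagonal_def by simp
  have Pc: "P \<in> carrier_mat n n" using Pd by simp
  define \<alpha> where "\<alpha> = max_abs_entry n A"
  have \<alpha>pos: "\<alpha> > 0"
  proof -
    obtain i j where ij: "i < n" "j < n" "A $$ (i,j) \<noteq> 0"
    proof (rule ccontr)
      assume "\<not> thesis"
      then have "\<And>i j. i < n \<Longrightarrow> j < n \<Longrightarrow> A $$ (i,j) = 0" using that by blast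
      then have "A = 0\<^sub>m n n" using A(1) by (intro eq_matI) auto
      then show False using A(3) by simp
    qed
    then have "0 < \<bar>A $$ (i,j)\<bar>" by simp
    also have "\<dots> \<le> \<alpha>" unfolding \<alpha>_def using mae_ge ij by blast
    finally show ?thesis .
  qed
  define b where "b i j = (P * A * P\<^sup>T) $$ (i,j)" for i j
  define h where "h k j = (\<Sum>m\<in>{0..<n}. T $$ (k,m) * L $$ (j,m))" for k j
  have PA: "\<And>i k. i < n \<Longrightarrow> k < n \<Longrightarrow> (P * A) $$ (i,k) = A $$ (\<sigma> i, k)"
  proof -
    fix i k assume ik: "i < n" "k < n"
    have "(P * A) $$ (i,k) = (\<Sum>m\<in>{0..<n}. (if m = \<sigma> i then 1 else 0) * A $$ (m,k))"
      using ik A(1) Pc unfolding Pd by (simp add: scalar_prod_def)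
    also have "\<dots> = (\<Sum>m\<in>{0..<n}. (if m = \<sigma> i then A $$ (m,k) else 0))"
      by (rule sum.cong) auto
    also have "\<dots> = A $$ (\<sigma> i, k)" using \<sigma>n[OF ik(1)] by (simp add: sum.delta')
    finally show "(P * A) $$ (i,k) = A $$ (\<sigma> i, k)" .
  qed
  have bA: "\<And>i j. i < n \<Longrightarrow> j < n \<Longrightarrow> b i j = A $$ (\<sigma> i, \<sigma> j)"
  proof -
    fix i j assume ij: "i < n" "j < n"
    have "b i j = (\<Sum>k\<in>{0..<n}. (P * A) $$ (i,k) * (if k = \<sigma> j then 1 else 0))"
      unfolding b_def using ij A(1) Pc unfolding Pd by (simp add: scalar_prod_def)
    also have "\<dots> = (\<Sum>k\<in>{0..<n}. A $$ (\<sigma> i, k) * (if k = \<sigma> j then 1 else 0))"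
      using PA ij by simp
    also have "\<dots> = (\<Sum>k\<in>{0..<n}. (if k = \<sigma> j then A $$ (\<sigma> i, k) else 0))"
      by (rule sum.cong) auto
    also have "\<dots> = A $$ (\<sigma> i, \<sigma> j)" using \<sigma>n[OF ij(2)] by (simp add: sum.delta')
    finally show "b i j = A $$ (\<sigma> i, \<sigma> j)" .
  qed
  have bLT: "\<And>i j. i < n \<Longrightarrow> j < n \<Longrightarrow> b i j = (\<Sum>k\<in>{0..<n}. L $$ (i,k) * h k j)"
  proof -
    fix i j assume ij: "i < n" "j < n"
    have "L * T * L\<^sup>T = L * (T * L\<^sup>T)" using Lc Tc by (intro assoc_mult_mat) auto
    then have "b i j = (L * (T * L\<^sup>T)) $$ (i,j)" unfolding b_def fact by simp
    also have "\<dots> = (\<Sum>k\<in>{0..<n}. L $$ (i,k) * (T * L\<^sup>T) $$ (k,j))"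
      using ij Lc Tc by (simp add: scalar_prod_def)
    also have "\<dots> = (\<Sum>k\<in>{0..<n}. L $$ (i,k) * h k j)"
      by (rule sum.cong) (use ij Lc Tc in \<open>auto simp: scalar_prod_def h_def\<close>)
    finally show "b i j = (\<Sum>k\<in>{0..<n}. L $$ (i,k) * h k j)" .
  qed
  have Asym: "\<And>i j. i < n \<Longrightarrow> j < n \<Longrightarrow> A $$ (i,j) = A $$ (j,i)"
  proof -
    fix i j assume ij: "i < n" "j < n"
    have "A\<^sup>T $$ (j,i) = A $$ (j,i)" using A(2) unfolding symmetric_mat_def by simp
    then show "A $$ (i,j) = A $$ (j,i)" using ij A(1) by simp
  qed
  have Tsym: "\<And>i j. i < n \<Longrightarrow> j < n \<Longrightarrow> T $$ (i,j) = T $$ (j,i)"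
  proof -
    fix i j assume ij: "i < n" "j < n"
    have "T\<^sup>T $$ (j,i) = T $$ (j,i)" using T(2) unfolding symmetric_mat_def by simp
    then show "T $$ (i,j) = T $$ (j,i)" using ij Tc by simp
  qed
  interpret aasen n "\<lambda>i j. L $$ (i,j)" "\<lambda>i j. T $$ (i,j)" b h \<alpha>
  proof
    show "3 \<le> n" by (rule n3)
  next
    fix i assume "i < n" then show "L $$ (i,i) = 1" using L unfolding unit_lower_triangular_def by simp
  next
    fix i j :: nat assume "i < j" "j < n" then show "L $$ (i,j) = 0"
      using L unfolding unit_lower_triangular_def by simp
  next
    fix i :: nat assume "0 < i" "i < n" then show "L $$ (i,0) = 0" using L_e1 by simp
  next
    fix i j :: nat assume "i < n" "j < n" then show "\<bar>L $$ (i,j)\<bar> \<le> 1" using L_bd by simp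
  next
    fix i j :: nat assume "i < n" "j < n" "i + 1 < j \<or> j + 1 < i" then show "T $$ (i,j) = 0"
      using T(1) unfolding tridiagonal_def by blast
  next
    fix i j :: nat assume "i < n" "j < n" then show "T $$ (i,j) = T $$ (j,i)" by (rule Tsym)
  next
    fix k j show "h k j = (\<Sum>m\<in>{0..<n}. T $$ (k,m) * L $$ (j,m))" by (rule h_def)
  next
    fix i j :: nat assume "i < n" "j < n" then show "b i j = (\<Sum>k\<in>{0..<n}. L $$ (i,k) * h k j)" by (rule bLT)
  next
    fix i j :: nat assume "i < n" "j < n" then show "b i j = b j i" using bA Asym \<sigma>n by simp
  next
    fix i j :: nat assume "i < n" "j < n" then show "\<bar>b i j\<bar> \<le> \<alpha>" using bA \<sigma>n mae_ge \<alpha>_def by simp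
  next
    show "\<alpha> > 0" by (rule \<alpha>pos)
  qed
  have n0: "0 < n" using n3 by simp
  have le: "max_abs_entry n T \<le> 2^(n-1) * \<alpha>" using t_le by (intro mae_le[OF n0]) auto
  have g1: "growth_factor n T A \<le> 2^(n-1)"
    unfolding growth_factor_def \<alpha>_def[symmetric] using le \<alpha>pos by (simp add: pos_divide_le_eq)
  have g2: "n \<ge> 6 \<longrightarrow> \<bar>T $$ (n - 1, n - 1)\<bar> < 2 ^ (n - 1) * max_abs_entry n A
              \<and> growth_factor n T A < 2 ^ (n - 1)"
  proof
    assume n6: "n \<ge> 6"
    have strict: "\<And>i j. i < n \<Longrightarrow> j < n \<Longrightarrow> \<bar>T $$ (i,j)\<bar> < 2^(n-1) * \<alpha>"
    proof -
      fix i j assume ij: "i < n" "j < n"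
      show "\<bar>T $$ (i,j)\<bar> < 2^(n-1) * \<alpha>"
      proof (cases "i = n-1 \<and> j = n-1")
        case True then show ?thesis using last_strict[OF n6] by simp
      next
        case False then show ?thesis using t_le_strict[OF ij False] by simp
      qed
    qed
    have "max_abs_entry n T < 2^(n-1) * \<alpha>" using strict by (intro mae_less[OF n0]) auto
    then have "growth_factor n T A < 2^(n-1)"
      unfolding growth_factor_def \<alpha>_def[symmetric] using \<alpha>pos by (simp add: pos_divide_less_eq)
    then show "\<bar>T $$ (n - 1, n - 1)\<bar> < 2 ^ (n - 1) * max_abs_entry n A
              \<and> growth_factor n T A < 2 ^ (n - 1)"
      using last_strict[OF n6] \<alpha>_def by simp
  qed
  show ?thesis using g1 g2 by blast
qed

end
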